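(* Consider the static multi-period newsvendor problem (MPNVP) with $T$ periods, described in the context, where the demands $X_1,\dots,X_T$ have a joint distribution $F$ which is continuous, and for $t=1,\dots,T$ let $\tilde F_t$ denote the CDF of $Y_t=\sum_{k=1}^t X_k$. Let $\nu\ge 0$ be a Lagrange multiplier for the budget constraint, and suppose that (1) $\nu \le \frac{b}{w_t-w_{t+1}}-1$ for all $t\in\{1,\dots,T-1\}$ (with $w_t>w_{t+1}$), and (2) $\nu \le \frac{b+p}{w_T}-1$. Then the vector $\boldsymbol q^*=(q_1^*,\dots,q_T^* )$ given by $$q_1^*=\tilde F_1^{-1}\!\left(\frac{b-(1+\nu)(w_1-w_2)}{h+b}\right),$$ $$q_t^*=\tilde F_t^{-1}\!\left(\frac{b-(1+\nu)(w_t-w_{t+1})}{h+b}\right)-\tilde F_{t-1}^{-1}\!\left(\frac{b-(1+\nu)(w_{t-1}-w_t)}{h+b}\right)\quad (2\le t\le T-1),$$ $$q_T^*=\tilde F_T^{-1}\!\left(\frac{b-(1+\nu)w_T+p}{h+b+p}\right)-\tilde F_{T-1}^{-1}\!\left(\frac{b-(1+\nu)(w_{T-1}-w_T)}{h+b}\right)$$ satisfies the KKT stationarity condition of MPNVP, i.e. $\frac{\partial}{\partial q_j}C_F(\boldsymbol q^* )+\nu w_j=0$ for all $j=1,\dots,T$.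
   Context: Setting (MPNVP): there are $T$ periods $t\in\{1,\dots,T\}$. The decision is $\boldsymbol q=(q_1,\dots,q_T)$, where $q_t$ is the amount of stock delivered at the start of period $t$. The demand in period $t$ is a random variable $X_t$, with $\boldsymbol X=(X_1,\dots,X_T)$ having joint CDF $F$. Inventory evolves by $I_0=0$, $I_t=I_{t-1}+q_t-X_t$, so $I_t=\sum_{k=1}^t(q_k-X_k)$; write $I_t^+=\max\{I_t,0\}$, $I_t^-=\max\{-I_t,0\}$. Nonnegative constants: holding cost $h$, backorder cost $b$, selling price $p$ (with $h+b>0$), unit ordering costs $w_1\ge w_2\ge\dots\ge w_T>0$, and budget $W$. The expected cost is $$C_F(\boldsymbol q)=p\,\mathbb E_F[I_T^-]+\sum_{t=1}^T\Big(h\,\mathbb E_F[I_t^+]+b\,\mathbb E_F[I_t^-]+w_tq_t-p\,\mathbb E_F[X_t]\Big),$$ and MPNVP is $\min_{\boldsymbol q} C_F(\boldsymbol q)$ subject to $\sum_{t=1}^T w_tq_t\le W$ and $q_t\ge 0$ for all $t$. The Lagrangian (ignoring non-negativity constraints) is $L(\boldsymbol q,\nu)=C_F(\boldsymbol q)+\nu\left(\sum_{t=1}^T w_tq_t-W\right)$, and the stationarity condition is $\partial L/\partial q_j=0$ for all $j$. In condition (1), if $w_t=w_{t+1}$ the corresponding constraint is vacuous. *)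

theory Defs
  imports "HOL-Probability.Probability"
begin

definition inv_level :: "(nat \<Rightarrow> real) \<Rightarrow> (nat \<Rightarrow> 'a \<Rightarrow> real) \<Rightarrow> nat \<Rightarrow> 'a \<Rightarrow> real" where
  "inv_level q X t \<omega> = (\<Sum>k=1..t. q k - X k \<omega>)"

definition mpnvp_cost ::
  "'a measure \<Rightarrow> nat \<Rightarrow> real \<Rightarrow> real \<Rightarrow> real \<Rightarrow> (nat \<Rightarrow> real) \<Rightarrow> (nat \<Rightarrow> 'a \<Rightarrow> real)
   \<Rightarrow> (nat \<Rightarrow> real) \<Rightarrow> real" where
  "mpnvp_cost M T h b p w X q =
     p * (\<integral>\<omega>. max (- inv_level q X T \<omega>) 0 \<partial>M) +
     (\<Sum>t=1..T. h * (\<integral>\<omega>. max (inv_level q X t \<omega>) 0 \<partial>M)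
              + b * (\<integral>\<omega>. max (- inv_level q X t \<omega>) 0 \<partial>M)
              + w t * q t - p * (\<integral>\<omega>. X t \<omega> \<partial>M))"

definition cum_cdf :: "'a measure \<Rightarrow> (nat \<Rightarrow> 'a \<Rightarrow> real) \<Rightarrow> nat \<Rightarrow> real \<Rightarrow> real" where
  "cum_cdf M X t y = measure M {\<omega> \<in> space M. (\<Sum>k=1..t. X k \<omega>) \<le> y}"

definition quantile :: "(real \<Rightarrow> real) \<Rightarrow> real \<Rightarrow> real" where
  "quantile G a = Inf {x. a \<le> G x}"

definition quantile_finite :: "(real \<Rightarrow> real) \<Rightarrow> real \<Rightarrow> bool" where
  "quantile_finite G a \<longleftrightarrow> {x. a \<le> G x} \<noteq> {} \<and> bdd_below {x. a \<le> G x}"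

end

theory Submission
  imports Defs
begin


lemma hyper_null:
  fixes T t :: nat and c :: real
  assumes t: "1 \<le> t" "t \<le> T"
  shows "emeasure (Pi\<^sub>M {1..T} (\<lambda>_. lborel)) {x \<in> space (Pi\<^sub>M {1..T} (\<lambda>_. lborel)). (\<Sum>k=1..t. x k) = c} = 0"
proof -
  interpret product_sigma_finite "\<lambda>_::nat. lborel :: real measure"
    by (simp add: product_sigma_finite_def lborel.sigma_finite_measure_axioms)
  let ?H = "{x \<in> space (Pi\<^sub>M {1..T} (\<lambda>_. lborel)). (\<Sum>k=1..t. x k) = c}"
  have ins: "insert 1 {2..T} = {1..T}" using t by auto
  have sm[measurable]: "(\<lambda>x::nat\<Rightarrow>real. \<Sum>k\<in>{1..t}. x k) \<in> borel_measurable (Pi\<^sub>M {1..T} (\<lambda>_. lborel))"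
    apply measurable using t by auto
  have Hm: "?H \<in> sets (Pi\<^sub>M {1..T} (\<lambda>_. lborel))"
  proof -
    have "?H = (\<lambda>x::nat\<Rightarrow>real. \<Sum>k\<in>{1..t}. x k) -` {c} \<inter> space (Pi\<^sub>M {1..T} (\<lambda>_. lborel))" by auto
    then show ?thesis using measurable_sets[OF sm, of "{c}"] by simp
  qed
  have "emeasure (Pi\<^sub>M {1..T} (\<lambda>_. lborel)) ?H = (\<integral>\<^sup>+ x. indicator ?H x \<partial>(Pi\<^sub>M (insert 1 {2..T}) (\<lambda>_. lborel)))"
    using Hm ins by simp
  also have "\<dots> = (\<integral>\<^sup>+ x. (\<integral>\<^sup>+ y. indicator ?H (x(1 := y)) \<partial>lborel) \<partial>(Pi\<^sub>M {2..T} (\<lambda>_. lborel)))"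
    by (rule product_nn_integral_insert) (use Hm ins in auto)
  also have "\<dots> \<le> (\<integral>\<^sup>+ x. (\<integral>\<^sup>+ y. indicator {c - (\<Sum>k=2..t. x k)} y \<partial>lborel) \<partial>(Pi\<^sub>M {2..T} (\<lambda>_. lborel)))"
  proof (intro nn_integral_mono)
    fix x :: "nat \<Rightarrow> real" and y :: real
    have s: "(\<Sum>k=1..t. (x(1:=y)) k) = y + (\<Sum>k=2..t. x k)"
    proof -
      have "{1..t} = insert 1 {2..t}" using t by auto
      moreover have "(\<Sum>k=2..t. (x(1:=y)) k) = (\<Sum>k=2..t. x k)"
        by (rule sum.cong) auto
      ultimately show ?thesis by simp
    qed
    show "indicator ?H (x(1 := y)) \<le> (indicator {c - (\<Sum>k=2..t. x k)} y :: ennreal)"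
      using s by (auto simp: indicator_def)
  qed
  also have "\<dots> = 0" by simp
  finally show ?thesis by simp
qed

lemma hyper_null_sets:
  fixes T t :: nat and c :: real
  assumes t: "1 \<le> t" "t \<le> T"
  shows "{x \<in> space (Pi\<^sub>M {1..T} (\<lambda>_. lborel)). (\<Sum>k=1..t. x k) = c} \<in> null_sets (Pi\<^sub>M {1..T} (\<lambda>_. lborel))"
proof -
  let ?H = "{x \<in> space (Pi\<^sub>M {1..T} (\<lambda>_. lborel)). (\<Sum>k=1..t. x k) = c}"
  have sm[measurable]: "(\<lambda>x::nat\<Rightarrow>real. \<Sum>k\<in>{1..t}. x k) \<in> borel_measurable (Pi\<^sub>M {1..T} (\<lambda>_. lborel))"
    apply measurable using t by auto
  have Hm: "?H \<in> sets (Pi\<^sub>M {1..T} (\<lambda>_. lborel))"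
  proof -
    have "?H = (\<lambda>x::nat\<Rightarrow>real. \<Sum>k\<in>{1..t}. x k) -` {c} \<inter> space (Pi\<^sub>M {1..T} (\<lambda>_. lborel))" by auto
    then show ?thesis using measurable_sets[OF sm, of "{c}"] by simp
  qed
  then show ?thesis using hyper_null[OF t, of c] by (simp add: null_sets_def)
qed

lemma atom_zero:
  fixes M :: "'a measure" and X :: "nat \<Rightarrow> 'a \<Rightarrow> real"
  assumes M: "prob_space M"
    and Xmeas: "\<And>t. t \<in> {1..T} \<Longrightarrow> X t \<in> borel_measurable M"
    and Fcont: "absolutely_continuous (Pi\<^sub>M {1..T} (\<lambda>_. lborel))
                  (distr M (Pi\<^sub>M {1..T} (\<lambda>_. lborel)) (\<lambda>\<omega>. \<lambda>t\<in>{1..T}. X t \<omega>))"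
    and t: "1 \<le> t" "t \<le> T"
  shows "measure M {\<omega> \<in> space M. (\<Sum>k=1..t. X k \<omega>) = c} = 0"
proof -
  let ?N = "Pi\<^sub>M {1..T} (\<lambda>_. lborel) :: (nat \<Rightarrow> real) measure"
  let ?\<Phi> = "\<lambda>\<omega>. \<lambda>t\<in>{1..T}. X t \<omega>"
  let ?H = "{x \<in> space ?N. (\<Sum>k=1..t. x k) = c}"
  have Phim: "?\<Phi> \<in> measurable M ?N"
    by (rule measurable_restrict) (use Xmeas in simp)
  have "?H \<in> null_sets (distr M ?N ?\<Phi>)"
    using Fcont hyper_null_sets[OF t, of c] unfolding absolutely_continuous_def by blast
  then have "emeasure (distr M ?N ?\<Phi>) ?H = 0" by (simp add: null_sets_def)
  have Hs: "?H \<in> sets ?N" using hyper_null_sets[OF t, of c] by (rule null_setsD2)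
  from \<open>emeasure (distr M ?N ?\<Phi>) ?H = 0\<close> have e: "emeasure M (?\<Phi> -` ?H \<inter> space M) = 0"
    unfolding emeasure_distr[OF Phim Hs] .
  have "?\<Phi> -` ?H \<inter> space M = {\<omega> \<in> space M. (\<Sum>k=1..t. X k \<omega>) = c}"
  proof -
    have s1: "\<And>\<omega>. (\<Sum>k=1..t. ?\<Phi> \<omega> k) = (\<Sum>k=1..t. X k \<omega>)"
      by (rule sum.cong) (use t in auto)
    have s2: "\<And>\<omega>. \<omega> \<in> space M \<Longrightarrow> ?\<Phi> \<omega> \<in> space ?N"
      using measurable_space[OF Phim] by blast
    show ?thesis
    proof (intro set_eqI iffI)
      fix \<omega> assume a: "\<omega> \<in> ?\<Phi> -` ?H \<inter> space M"
      then have "\<omega> \<in> space M" "(\<Sum>k=1..t. ?\<Phi> \<omega> k) = c" by (simp_all only: vimage_eq Int_iff mem_Collect_eq)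
      then show "\<omega> \<in> {\<omega> \<in> space M. (\<Sum>k=1..t. X k \<omega>) = c}" using s1 by (simp only: mem_Collect_eq)
    next
      fix \<omega> assume a: "\<omega> \<in> {\<omega> \<in> space M. (\<Sum>k=1..t. X k \<omega>) = c}"
      then have "\<omega> \<in> space M" "(\<Sum>k=1..t. X k \<omega>) = c" by (simp_all only: mem_Collect_eq)
      then show "\<omega> \<in> ?\<Phi> -` ?H \<inter> space M" using s1 s2 by (simp only: vimage_eq Int_iff mem_Collect_eq)
    qed
  qed
  then show ?thesis using e by (simp add: measure_def)
qed

lemma cum_cdf_cont:
  fixes M :: "'a measure" and X :: "nat \<Rightarrow> 'a \<Rightarrow> real"
  assumes M: "prob_space M"
    and Xmeas: "\<And>t. t \<in> {1..T} \<Longrightarrow> X t \<in> borel_measurable M"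
    and Fcont: "absolutely_continuous (Pi\<^sub>M {1..T} (\<lambda>_. lborel))
                  (distr M (Pi\<^sub>M {1..T} (\<lambda>_. lborel)) (\<lambda>\<omega>. \<lambda>t\<in>{1..T}. X t \<omega>))"
    and t: "1 \<le> t" "t \<le> T"
  shows "isCont (cum_cdf M X t) c"
proof -
  let ?Y = "\<lambda>\<omega>. \<Sum>k=1..t. X k \<omega>"
  have Ym: "?Y \<in> borel_measurable M"
    by (rule borel_measurable_sum) (use Xmeas t in auto)
  interpret D: real_distribution "distr M borel ?Y"
    using prob_space.prob_space_distr[OF M Ym] by (simp add: real_distribution_def real_distribution_axioms_def)
  have eq1: "cum_cdf M X t y = cdf (distr M borel ?Y) y" for y
  proof -
    have "cdf (distr M borel ?Y) y = measure M (?Y -` {..y} \<inter> space M)"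
      unfolding cdf_def using Ym by (subst measure_distr) auto
    also have "?Y -` {..y} \<inter> space M = {\<omega> \<in> space M. ?Y \<omega> \<le> y}" by auto
    finally show ?thesis unfolding cum_cdf_def by simp
  qed
  have eq: "cum_cdf M X t = cdf (distr M borel ?Y)" using eq1 by blast
  have "measure (distr M borel ?Y) {c} = measure M (?Y -` {c} \<inter> space M)"
    using Ym by (subst measure_distr) auto
  also have "?Y -` {c} \<inter> space M = {\<omega> \<in> space M. ?Y \<omega> = c}" by auto
  also have "measure M \<dots> = 0" by (rule atom_zero[OF M Xmeas Fcont t])
  finally show ?thesis unfolding eq using D.isCont_cdf by simp
qed



lemma quot_bound:
  fixes a b c y D :: real
  assumes "(y - c) * a \<le> D" "D \<le> (y - c) * b" "y \<noteq> c"
  shows "min a b \<le> D / (y - c) \<and> D / (y - c) \<le> max a b"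
proof (cases "y > c")
  case True
  then have "a \<le> D / (y - c)" "D / (y - c) \<le> b" using assms
    by (simp_all add: pos_le_divide_eq pos_divide_le_eq mult.commute)
  then show ?thesis by linarith
next
  case False
  then have "y - c < 0" using assms by simp
  then have "D / (y - c) \<le> a" "b \<le> D / (y - c)" using assms
    by (simp_all add: neg_le_divide_eq neg_divide_le_eq mult.commute)
  then show ?thesis by linarith
qed

lemma deriv_G:
  fixes M :: "'a measure" and Y :: "'a \<Rightarrow> real"
  assumes M: "prob_space M" and Yi: "integrable M Y"
    and cont: "isCont (\<lambda>y. measure M {\<omega>\<in>space M. Y \<omega> \<le> y}) c"
  shows "((\<lambda>c. \<integral>\<omega>. max (c - Y \<omega>) 0 \<partial>M) has_real_derivative measure M {\<omega>\<in>space M. Y \<omega> \<le> c}) (at c)"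
proof -
  interpret prob_space M by (rule M)
  define F where "F y = measure M {\<omega>\<in>space M. Y \<omega> \<le> y}" for y
  define G where "G c = (\<integral>\<omega>. max (c - Y \<omega>) 0 \<partial>M)" for c
  have Ym[measurable]: "Y \<in> borel_measurable M" using Yi by (rule borel_measurable_integrable)
  have int: "integrable M (\<lambda>\<omega>. max (d - Y \<omega>) 0)" for d
    by (rule integrable_max[OF Bochner_Integration.integrable_diff[OF integrable_const Yi] integrable_zero])
  have Am: "{\<omega>\<in>space M. Y \<omega> \<le> y} \<in> sets M" for y by measurable
  have ind: "(\<integral>\<omega>. indicator {\<omega>\<in>space M. Y \<omega> \<le> y} \<omega> \<partial>M) = F y" for y
    unfolding F_def using Am by (simp add: integral_indicator emeasure_eq_measure)
  have indi: "integrable M (\<lambda>\<omega>. (d - e) * indicator {\<omega>\<in>space M. Y \<omega> \<le> y} \<omega>)" for d e y :: real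
    using Am by (intro integrable_mult_right integrable_real_indicator) (auto simp: emeasure_eq_measure)
  have bnd: "(d - e) * F e \<le> G d - G e \<and> G d - G e \<le> (d - e) * F d" for d e
  proof -
    have GD: "G d - G e = (\<integral>\<omega>. max (d - Y \<omega>) 0 - max (e - Y \<omega>) 0 \<partial>M)"
      unfolding G_def by (rule Bochner_Integration.integral_diff[OF int int, symmetric])
    have L: "(d - e) * F e = (\<integral>\<omega>. (d - e) * indicator {\<omega>\<in>space M. Y \<omega> \<le> e} \<omega> \<partial>M)"
      by (simp add: ind[symmetric])
    have R: "(d - e) * F d = (\<integral>\<omega>. (d - e) * indicator {\<omega>\<in>space M. Y \<omega> \<le> d} \<omega> \<partial>M)"
      by (simp add: ind[symmetric])
    have "(\<integral>\<omega>. (d - e) * indicator {\<omega>\<in>space M. Y \<omega> \<le> e} \<omega> \<partial>M) \<le> (\<integral>\<omega>. max (d - Y \<omega>) 0 - max (e - Y \<omega>) 0 \<partial>M)"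
      by (rule integral_mono[OF indi Bochner_Integration.integrable_diff[OF int int]]) (auto simp: indicator_def max_def)
    moreover have "(\<integral>\<omega>. max (d - Y \<omega>) 0 - max (e - Y \<omega>) 0 \<partial>M) \<le> (\<integral>\<omega>. (d - e) * indicator {\<omega>\<in>space M. Y \<omega> \<le> d} \<omega> \<partial>M)"
      by (rule integral_mono[OF Bochner_Integration.integrable_diff[OF int int] indi]) (auto simp: indicator_def max_def)
    ultimately show ?thesis using GD by (simp add: F_def)
  qed
  have Ft: "(F \<longlongrightarrow> F c) (at c)" using cont unfolding F_def[abs_def] isCont_def .
  have "((\<lambda>y. (G y - G c) / (y - c)) \<longlongrightarrow> F c) (at c)"
  proof (rule tendsto_sandwich[where f="\<lambda>y. min (F c) (F y)" and h="\<lambda>y. max (F c) (F y)"])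
    show "\<forall>\<^sub>F y in at c. min (F c) (F y) \<le> (G y - G c) / (y - c)"
      unfolding eventually_at_filter
      by (intro always_eventually allI impI) (use quot_bound bnd in blast)
    show "\<forall>\<^sub>F y in at c. (G y - G c) / (y - c) \<le> max (F c) (F y)"
      unfolding eventually_at_filter
      by (intro always_eventually allI impI) (use quot_bound bnd in blast)
    show "((\<lambda>y. min (F c) (F y)) \<longlongrightarrow> F c) (at c)"
      using tendsto_min[OF tendsto_const[of "F c"] Ft] by simp
    show "((\<lambda>y. max (F c) (F y)) \<longlongrightarrow> F c) (at c)"
      using tendsto_max[OF tendsto_const[of "F c"] Ft] by simp
  qed
  then show ?thesis unfolding has_field_derivative_iff G_def[abs_def] F_def by simp
qed



lemma quantile_eq:
  fixes G :: "real \<Rightarrow> real"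
  assumes cont: "\<And>x. isCont G x" and fin: "quantile_finite G a"
  shows "G (quantile G a) = a"
proof -
  let ?S = "{x. a \<le> G x}"
  have ne: "?S \<noteq> {}" and bdd: "bdd_below ?S" using fin by (auto simp: quantile_finite_def)
  have cl: "closed ?S"
    by (rule closed_Collect_le) (auto intro!: continuous_at_imp_continuous_on cont)
  have qS: "quantile G a \<in> ?S" unfolding quantile_def by (rule closed_contains_Inf[OF ne bdd cl])
  then have ge: "a \<le> G (quantile G a)" by simp
  show ?thesis
  proof (rule ccontr)
    assume "G (quantile G a) \<noteq> a"
    with ge have gt: "a < G (quantile G a)" by simp
    have "(G \<longlongrightarrow> G (quantile G a)) (at (quantile G a))" using cont isCont_def by blast
    from order_tendstoD(1)[OF this gt] obtain d where d: "d > 0"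
      and P: "\<And>x. x \<noteq> quantile G a \<Longrightarrow> dist x (quantile G a) < d \<Longrightarrow> a < G x"
      unfolding eventually_at by blast
    let ?x = "quantile G a - d / 2"
    have "a < G ?x" using d by (intro P) (auto simp: dist_real_def)
    then have "?x \<in> ?S" by simp
    then have "quantile G a \<le> ?x" unfolding quantile_def by (rule cInf_lower[OF _ bdd])
    with d show False by simp
  qed
qed

theorem theorem3p1:
  fixes M :: "'a measure" and X :: "nat \<Rightarrow> 'a \<Rightarrow> real"
    and T :: nat and h b p \<nu> :: real and w :: "nat \<Rightarrow> real"
    and qs :: "nat \<Rightarrow> real"
  assumes M: "prob_space M"
    and T2: "2 \<le> T"
    and Xmeas: "\<And>t. t \<in> {1..T} \<Longrightarrow> X t \<in> borel_measurable M"
    and Xint: "\<And>t. t \<in> {1..T} \<Longrightarrow> integrable M (X t)"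
    and Fcont: "absolutely_continuous (Pi\<^sub>M {1..T} (\<lambda>_. lborel))
                  (distr M (Pi\<^sub>M {1..T} (\<lambda>_. lborel)) (\<lambda>\<omega>. \<lambda>t\<in>{1..T}. X t \<omega>))"
    and h: "h \<ge> 0" and b: "b \<ge> 0" and p: "p \<ge> 0" and hb: "h + b > 0"
    and wmono: "\<And>t. t \<in> {1..<T} \<Longrightarrow> w (t + 1) \<le> w t"
    and wpos: "\<And>t. t \<in> {1..T} \<Longrightarrow> w t > 0"
    and nu: "\<nu> \<ge> 0"
    and cond1: "\<And>t. t \<in> {1..<T} \<Longrightarrow> w t > w (t + 1) \<Longrightarrow> \<nu> \<le> b / (w t - w (t + 1)) - 1"
    and cond2: "\<nu> \<le> (b + p) / w T - 1"
    and qfin: "\<And>t. t \<in> {1..<T} \<Longrightarrow>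
                 quantile_finite (cum_cdf M X t) ((b - (1 + \<nu>) * (w t - w (t + 1))) / (h + b))"
    and qfinT: "quantile_finite (cum_cdf M X T) ((b - (1 + \<nu>) * w T + p) / (h + b + p))"
    and qs1: "qs 1 = quantile (cum_cdf M X 1) ((b - (1 + \<nu>) * (w 1 - w 2)) / (h + b))"
    and qst: "\<And>t. 2 \<le> t \<Longrightarrow> t \<le> T - 1 \<Longrightarrow>
                qs t = quantile (cum_cdf M X t) ((b - (1 + \<nu>) * (w t - w (t + 1))) / (h + b))
                     - quantile (cum_cdf M X (t - 1)) ((b - (1 + \<nu>) * (w (t - 1) - w t)) / (h + b))"
    and qsT: "qs T = quantile (cum_cdf M X T) ((b - (1 + \<nu>) * w T + p) / (h + b + p))
                - quantile (cum_cdf M X (T - 1)) ((b - (1 + \<nu>) * (w (T - 1) - w T)) / (h + b))"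
  shows "\<forall>j \<in> {1..T}.
           ((\<lambda>x. mpnvp_cost M T h b p w X (qs(j := x))) has_real_derivative (- \<nu> * w j)) (at (qs j))"
  proof
  fix j assume j: "j \<in> {1..T}"
  interpret P: prob_space M by (rule M)
  define Y where "Y t \<omega> = (\<Sum>k=1..t. X k \<omega>)" for t \<omega>
  define F where "F t = cum_cdf M X t" for t
  define G where "G t c = (\<integral>\<omega>. max (c - Y t \<omega>) 0 \<partial>M)" for t c
  define EY where "EY t = (\<integral>\<omega>. Y t \<omega> \<partial>M)" for t
  define EXp where "EXp t = (\<integral>\<omega>. X t \<omega> \<partial>M)" for t
  define Qs where "Qs t = (\<Sum>k=1..t. qs k)" for t
  define d where "d t = (if j \<le> t then 1 else 0 :: real)" for t
  define L where "L t x = Qs t + d t * (x - qs j)" for t x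
  define A where "A t = (b - (1 + \<nu>) * (w t - w (t + 1))) / (h + b)" for t
  define AT where "AT = (b - (1 + \<nu>) * w T + p) / (h + b + p)"
  have Yi: "integrable M (Y t)" if "t \<le> T" for t
    unfolding Y_def[abs_def] by (rule Bochner_Integration.integrable_sum) (use Xint that in auto)
  have cont: "isCont (F t) c" if "1 \<le> t" "t \<le> T" for t c
    unfolding F_def by (rule cum_cdf_cont[OF M Xmeas Fcont that])
  have Feq: "F t = (\<lambda>y. measure M {\<omega>\<in>space M. Y t \<omega> \<le> y})" for t
    by (rule ext) (simp add: F_def cum_cdf_def Y_def)
  have dG: "(G t has_real_derivative F t c) (at c)" if "1 \<le> t" "t \<le> T" for t c
    unfolding G_def Feq
    by (rule deriv_G[OF M Yi[OF that(2)]]) (use cont[OF that, of c] Feq in simp)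
  have intG: "integrable M (\<lambda>\<omega>. max (c - Y t \<omega>) 0)" if "t \<le> T" for t c
    by (rule integrable_max[OF Bochner_Integration.integrable_diff[OF P.integrable_const Yi[OF that]] integrable_zero])
  have inv: "inv_level q X t \<omega> = (\<Sum>k=1..t. q k) - Y t \<omega>" for q t \<omega>
    by (simp add: inv_level_def Y_def sum_subtractf)
  have Ipos: "(\<integral>\<omega>. max (inv_level q X t \<omega>) 0 \<partial>M) = G t (\<Sum>k=1..t. q k)" for q t
    by (simp add: inv G_def)
  have Ineg: "(\<integral>\<omega>. max (- inv_level q X t \<omega>) 0 \<partial>M) = G t (\<Sum>k=1..t. q k) - (\<Sum>k=1..t. q k) + EY t"
    if "t \<le> T" for q t
  proof -
    let ?Q = "\<Sum>k=1..t. q k"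
    have "(\<lambda>\<omega>. max (- inv_level q X t \<omega>) 0) = (\<lambda>\<omega>. (max (?Q - Y t \<omega>) 0 + Y t \<omega>) - ?Q)"
      by (rule ext) (simp add: inv max_def)
    then have "(\<integral>\<omega>. max (- inv_level q X t \<omega>) 0 \<partial>M) = (\<integral>\<omega>. (max (?Q - Y t \<omega>) 0 + Y t \<omega>) - ?Q \<partial>M)"
      by simp
    also have "\<dots> = (\<integral>\<omega>. max (?Q - Y t \<omega>) 0 + Y t \<omega> \<partial>M) - ?Q"
      by (subst Bochner_Integration.integral_diff)
         (auto intro!: Bochner_Integration.integrable_add intG Yi that simp: P.prob_space)
    also have "\<dots> = G t ?Q + EY t - ?Q"
      by (subst Bochner_Integration.integral_add) (auto intro!: intG Yi that simp: G_def EY_def)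
    finally show ?thesis by simp
  qed
  have Qx: "(\<Sum>k=1..t. (qs(j:=x)) k) = L t x" for t x
  proof -
    have "(\<Sum>k=1..t. (qs(j:=x)) k) = (\<Sum>k=1..t. qs k + (if k = j then x - qs j else 0))"
      by (rule sum.cong) auto
    also have "\<dots> = Qs t + d t * (x - qs j)"
      using j by (simp add: sum.distrib Qs_def d_def)
    finally show ?thesis by (simp add: L_def)
  qed
  have Qx2: "sum (qs(j:=x)) {Suc 0..t} = L t x" for t x
    using Qx by (simp only: One_nat_def)
  have costeq: "(\<lambda>x. mpnvp_cost M T h b p w X (qs(j := x))) =
     (\<lambda>x. p * (G T (L T x) - L T x + EY T) +
        (\<Sum>t=1..T. h * G t (L t x) + b * (G t (L t x) - L t x + EY t) + w t * (qs(j:=x)) t - p * EXp t))"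
  proof (rule ext)
    fix x
    show "mpnvp_cost M T h b p w X (qs(j := x)) = p * (G T (L T x) - L T x + EY T) +
        (\<Sum>t=1..T. h * G t (L t x) + b * (G t (L t x) - L t x + EY t) + w t * (qs(j:=x)) t - p * EXp t)"
      unfolding mpnvp_cost_def
      by (intro arg_cong2[where f="(+)"] arg_cong2[where f="(*)"] refl sum.cong)
         (simp_all add: Ipos Ineg Qx Qx2 EXp_def del: fun_upd_apply)
  qed
  have dL: "(L t has_real_derivative d t) (at x)" for t x
    unfolding L_def[abs_def] by (auto intro!: derivative_eq_intros)
  have LQ: "L t (qs j) = Qs t" for t by (simp add: L_def)
  have dGL: "((\<lambda>x. G t (L t x)) has_real_derivative F t (Qs t) * d t) (at (qs j))"
    if "1 \<le> t" "t \<le> T" for t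
    using DERIV_chain2[OF dG[OF that, of "L t (qs j)"] dL[of t "qs j"]] by (simp add: LQ)
  have dq: "((\<lambda>x. (qs(j:=x)) t) has_real_derivative (if t = j then 1 else 0)) (at (qs j))" for t
    by (cases "t = j") (auto intro!: derivative_eq_intros)
  have der: "((\<lambda>x. p * (G T (L T x) - L T x + EY T) +
        (\<Sum>t=1..T. h * G t (L t x) + b * (G t (L t x) - L t x + EY t) + w t * (qs(j:=x)) t - p * EXp t))
     has_real_derivative
      p * (F T (Qs T) * d T - d T + 0) +
        (\<Sum>t=1..T. h * (F t (Qs t) * d t) + b * (F t (Qs t) * d t - d t + 0) + w t * (if t = j then 1 else 0) - 0))
     (at (qs j))"
    apply (intro DERIV_add DERIV_cmult DERIV_diff DERIV_sum DERIV_const dL dq)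
    using T2 by (auto intro!: dGL)
  have val: "p * (F T (Qs T) * d T - d T + 0) +
        (\<Sum>t=1..T. h * (F t (Qs t) * d t) + b * (F t (Qs t) * d t - d t + 0) + w t * (if t = j then 1 else 0) - 0)
        = - \<nu> * w j"
  proof -
    have T1: "T - 1 + 1 = T" "Suc (T - 1) = T" using T2 by auto
    have QsA: "Qs t = quantile (F t) (A t)" if "1 \<le> t" "t < T" for t
      using that
    proof (induction t)
      case 0 then show ?case by simp
    next
      case (Suc n)
      show ?case
      proof (cases "n = 0")
        case True
        then show ?thesis using qs1 by (simp add: Qs_def F_def A_def numeral_2_eq_2)
      next
        case False
        then have IH: "Qs n = quantile (F n) (A n)" using Suc by simp
        have "Qs (Suc n) = Qs n + qs (Suc n)" by (simp add: Qs_def)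
        moreover have "qs (Suc n) = quantile (F (Suc n)) (A (Suc n)) - quantile (F n) (A n)"
          using qst[of "Suc n"] Suc.prems False by (simp add: F_def A_def)
        ultimately show ?thesis using IH by simp
      qed
    qed
    have QsT: "Qs T = quantile (F T) AT"
    proof -
      have "Qs T = Qs (Suc (T - 1))" using T1 by simp
      also have "\<dots> = Qs (T - 1) + qs (Suc (T - 1))" by (simp only: Qs_def sum.cl_ivl_Suc) simp
      also have "\<dots> = Qs (T - 1) + qs T" using T1 by simp
      also have "Qs (T - 1) = quantile (F (T - 1)) (A (T - 1))" using T2 by (intro QsA) auto
      finally show ?thesis using qsT T1 by (simp add: F_def A_def AT_def)
    qed
    have FA: "F t (Qs t) = A t" if "1 \<le> t" "t < T" for t
      unfolding QsA[OF that] using that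
      by (intro quantile_eq cont) (use qfin[of t] in \<open>auto simp: F_def A_def\<close>)
    have FT: "F T (Qs T) = AT"
      unfolding QsT using T2 qfinT
      by (intro quantile_eq cont) (auto simp: F_def AT_def)
    have dT: "d T = 1" using j by (simp add: d_def)
    define f where "f t = (h + b) * F t (Qs t) - b" for t
    have s1: "(\<Sum>t=1..T. h * (F t (Qs t) * d t) + b * (F t (Qs t) * d t - d t + 0) + w t * (if t = j then 1 else 0) - 0)
        = (\<Sum>t=1..T. f t * d t) + w j"
    proof -
      have "(\<Sum>t=1..T. h * (F t (Qs t) * d t) + b * (F t (Qs t) * d t - d t + 0) + w t * (if t = j then 1 else 0) - 0)
          = (\<Sum>t=1..T. f t * d t + w t * (if t = j then 1 else 0))"
        by (rule sum.cong) (auto simp: f_def algebra_simps)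
      also have "\<dots> = (\<Sum>t=1..T. f t * d t) + (\<Sum>t=1..T. w t * (if t = j then 1 else 0))"
        by (rule sum.distrib)
      also have "(\<Sum>t=1..T. w t * (if t = j then 1 else 0)) = w j"
        using j by (simp add: if_distrib cong: if_cong)
      finally show ?thesis .
    qed
    have s2: "(\<Sum>t=1..T. f t * d t) = (\<Sum>t=j..T. f t)"
      by (rule sum.mono_neutral_cong_right) (use j in \<open>auto simp: d_def\<close>)
    have s3: "(\<Sum>t=j..T. f t) = (\<Sum>t=j..<T. f t) + f T"
    proof -
      have "{j..T} = insert T {j..<T}" using j by auto
      then show ?thesis by simp
    qed
    have s4: "(\<Sum>t=j..<T. f t) = - (1 + \<nu>) * (w j - w T)"
    proof -
      have "(\<Sum>t=j..<T. f t) = (\<Sum>t=j..<T. - (1 + \<nu>) * (w t - w (Suc t)))"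
      proof (rule sum.cong)
        fix t assume "t \<in> {j..<T}"
        then have "1 \<le> t" "t < T" using j by auto
        then show "f t = - (1 + \<nu>) * (w t - w (Suc t))"
          using FA hb by (simp add: f_def A_def field_simps)
      qed simp
      also have "\<dots> = - (1 + \<nu>) * (\<Sum>t=j..<T. w t - w (Suc t))"
        by (simp add: sum_distrib_left)
      also have "(\<Sum>t=j..<T. w t - w (Suc t)) = w j - w T"
        using sum_Suc_diff'[of j T w] j by (simp add: sum_subtractf)
      finally show ?thesis .
    qed
    have s5: "f T + p * (AT - 1) = - (1 + \<nu>) * w T"
    proof -
      have "h + b + p > 0" using hb p by linarith
      then have e: "(h + b + p) * AT = b - (1 + \<nu>) * w T + p" by (simp add: AT_def)
      show ?thesis unfolding f_def FT using e by (simp add: algebra_simps)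
    qed
    show ?thesis
      unfolding s1 s2 s3 s4 dT using s5 FT by (simp add: algebra_simps)
  qed
  show "((\<lambda>x. mpnvp_cost M T h b p w X (qs(j := x))) has_real_derivative (- \<nu> * w j)) (at (qs j))"
    unfolding costeq using der val by simp
qed

end
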